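(* In the packet-skipping model with parameters $\lambda,\mu>0$, $d>0$, $\theta\in[0,d]$, the expected length of a buffer clearance period is $$\mathbb{E}[T]=\frac{1-e^{-(\lambda+\mu)(d-\theta)}}{\mu+\lambda e^{-(\lambda+\mu)(d-\theta)}}.$$
   Context: Packet-skipping model: a single server with one extra waiting ("buffer") position. Packets arrive according to a Poisson process of rate $\lambda$; service times are i.i.d. exponential with rate $\mu$, independent of arrivals; service is non-preemptive. A packet arriving to an empty system immediately enters service. A packet arriving while the server is busy is placed in the buffer; if the buffer already holds a packet, that packet is discarded and replaced by the new one. Each packet arriving at time $s$ has absolute deadline $s+d$; its lead-time at time $u$ is $s+d-u$. With threshold $\theta\in[0,d]$, a buffered packet is removed (never served) as soon as its lead-time drops below $\theta$, i.e. once it has waited $d-\theta$ in the buffer; otherwise it enters service when the server becomes free. A buffer clearance period is a maximal time interval during which the buffer is continuously occupied (it starts when a packet enters an empty buffer while the server is busy, and ends when the buffer becomes empty, either because the buffered packet enters service or because it is removed by the threshold rule); $T$ denotes its length. *)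

theory Defs
  imports "HOL-Probability.Probability"
begin

text \<open>Time 0 is the start of the period (a packet has just entered the empty buffer
  while the server is busy).  \<open>s\<close> is the residual service time of the packet in
  service, \<open>a k\<close> is the (k+1)-st interarrival time after time 0 (so the k-th
  arrival after time 0 happens at time a 0 + ... + a (k-1)), and \<open>w = d - \<theta>\<close> is the
  maximal waiting time in the buffer.  Every arrival replaces the buffered packet,
  restarting its waiting clock; the buffered packet is removed at the first time
  a buffered packet has waited w without being replaced, i.e. at time
  (a 0 + ... + a (N-1)) + w with N the first index with a N > w.\<close>

definition removal_time :: "real \<Rightarrow> (nat \<Rightarrow> real) \<Rightarrow> real" where
  "removal_time w a = (let N = (LEAST k. a k > w) in (\<Sum>i<N. a i) + w)"

definition clearance_length :: "real \<Rightarrow> real \<Rightarrow> (nat \<Rightarrow> real) \<Rightarrow> real" where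
  "clearance_length w s a = min s (removal_time w a)"

end

theory Submission
  imports Defs
begin

lemma exp_has_int:
  fixes a c r :: real
  assumes "c > 0" "r \<ge> 0"
  shows "((\<lambda>x. a * exp (- c * x)) has_integral (a / c * (1 - exp (- c * r)))) {0..r}"
proof -
  have "((\<lambda>x. a * exp (- c * x)) has_integral ((- a / c * exp (- c * r)) - (- a / c * exp (- c * 0)))) {0..r}"
    apply (rule fundamental_theorem_of_calculus)
    using assms apply simp
    apply (auto intro!: derivative_eq_intros simp: has_real_derivative_iff_has_vector_derivative[symmetric])
    using assms by (auto simp: field_simps)
  then show ?thesis using assms by (simp add: field_simps)
qed

lemma exp_nn_int:
  fixes a c r :: real
  assumes "c > 0" "r \<ge> 0" "a \<ge> 0"
  shows "(\<integral>\<^sup>+x. ennreal (indicator {0..r} x * (a * exp (- c * x))) \<partial>lborel) = ennreal (a / c * (1 - exp (- c * r)))"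
  using nn_integral_has_integral_lebesgue[OF _ exp_has_int[OF assms(1,2), of a]] assms by simp


lemma (in prob_space) geo_main:
  fixes A :: "nat \<Rightarrow> 'a \<Rightarrow> real" and lam w c :: real
  assumes lam: "lam > 0" and w: "w \<ge> 0" and c: "c \<ge> 0"
    and distA: "\<And>k. distributed M lborel (A k) (exponential_density lam)"
    and ind: "\<And>J (f :: nat \<Rightarrow> real \<Rightarrow> ennreal). finite J \<Longrightarrow> (\<And>k. f k \<in> borel_measurable borel) \<Longrightarrow>
       (\<integral>\<^sup>+\<omega>. (\<Prod>k\<in>J. f k (A k \<omega>)) \<partial>M) = (\<Prod>k\<in>J. \<integral>\<^sup>+\<omega>. f k (A k \<omega>) \<partial>M)"
  shows "(\<integral>\<^sup>+\<omega>. (if \<exists>k. w < A k \<omega> then ennreal (exp (- c * (\<Sum>i<(LEAST k. w < A k \<omega>). A i \<omega>))) else 0) \<partial>M)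
     = ennreal (exp (- w * lam) / (1 - lam / (lam + c) * (1 - exp (- (lam + c) * w))))"
proof -
  have Am[measurable]: "\<And>k. A k \<in> borel_measurable M"
    using distributed_measurable[OF distA] by simp
  define q where "q = lam / (lam + c) * (1 - exp (- (lam + c) * w))"
  define p where "p = exp (- w * lam)"
  define \<phi> where "\<phi> n k x = (if k < n then ennreal (indicator {..w} x * exp (- c * x))
      else ennreal (indicator {w<..} x))" for n k :: nat and x :: real
  define h where "h n \<omega> = (\<Prod>k\<in>{..n}. \<phi> n k (A k \<omega>))" for n \<omega>
  have \<phi>m[measurable]: "\<phi> n k \<in> borel_measurable borel" for n k
    unfolding \<phi>_def by measurable
  have hm[measurable]: "h n \<in> borel_measurable M" for n
    unfolding h_def by measurable
  have split: "(\<Prod>k\<in>{..n}. g k) = (\<Prod>k\<in>{..<n}. g k) * g n" for n and g :: "nat \<Rightarrow> ennreal"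
    by (metis lessThan_Suc_atMost prod.lessThan_Suc)
  have e1: "exp (- (lam + c) * w) \<le> 1" using lam c w by (simp add: mult_nonpos_nonneg)
  have q0: "0 \<le> q" using lam c e1 by (auto simp: q_def intro!: divide_nonneg_nonneg mult_nonneg_nonneg)
  have q1: "q < 1"
  proof -
    have "lam / (lam + c) \<le> 1" using lam c by auto
    moreover have "1 - exp (- (lam + c) * w) < 1" by simp
    moreover have "0 \<le> 1 - exp (- (lam + c) * w)" using e1 by simp
    moreover have "0 \<le> lam / (lam + c)" using lam c by simp
    ultimately have "lam / (lam + c) * (1 - exp (- (lam + c) * w)) \<le> 1 - exp (- (lam + c) * w)"
      by (intro mult_left_le_one_le) auto
    then have "lam / (lam + c) * (1 - exp (- (lam + c) * w)) < 1"
      using exp_gt_zero[of "- (lam + c) * w"] by linarith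
    then show ?thesis by (simp add: q_def)
  qed
  have Eless: "(\<integral>\<^sup>+\<omega>. \<phi> n k (A k \<omega>) \<partial>M) = ennreal q" if "k < n" for n k
  proof -
    have "(\<integral>\<^sup>+\<omega>. \<phi> n k (A k \<omega>) \<partial>M) = (\<integral>\<^sup>+x. ennreal (exponential_density lam x) * \<phi> n k x \<partial>lborel)"
      by (rule distributed_nn_integral[OF distA, symmetric]) simp
    also have "\<dots> = (\<integral>\<^sup>+x. ennreal (indicator {0..w} x * (lam * exp (- (lam + c) * x))) \<partial>lborel)"
      using that lam
      by (intro nn_integral_cong)
         (auto simp: \<phi>_def exponential_density_def indicator_def ennreal_mult'[symmetric] exp_add[symmetric] algebra_simps)
    also have "\<dots> = ennreal q"
      using lam c w by (subst exp_nn_int) (auto simp: q_def)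
    finally show ?thesis .
  qed
  have Eeq: "(\<integral>\<^sup>+\<omega>. \<phi> n n (A n \<omega>) \<partial>M) = ennreal p" for n
  proof -
    have "(\<integral>\<^sup>+\<omega>. \<phi> n n (A n \<omega>) \<partial>M) = (\<integral>\<^sup>+\<omega>. indicator {\<omega>\<in>space M. w < A n \<omega>} \<omega> \<partial>M)"
      by (intro nn_integral_cong) (auto simp: \<phi>_def indicator_def)
    also have "\<dots> = emeasure M {\<omega>\<in>space M. w < A n \<omega>}"
      by (rule nn_integral_indicator) measurable
    also have "\<dots> = ennreal p"
      using exponential_distributedD_gt[OF distA w lam] by (simp add: emeasure_eq_measure p_def)
    finally show ?thesis .
  qed
  have Eh: "(\<integral>\<^sup>+\<omega>. h n \<omega> \<partial>M) = ennreal (q ^ n * p)" for n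
  proof -
    have "(\<integral>\<^sup>+\<omega>. h n \<omega> \<partial>M) = (\<Prod>k\<in>{..n}. \<integral>\<^sup>+\<omega>. \<phi> n k (A k \<omega>) \<partial>M)"
      unfolding h_def by (rule ind) auto
    also have "\<dots> = (\<Prod>k\<in>{..<n}. \<integral>\<^sup>+\<omega>. \<phi> n k (A k \<omega>) \<partial>M) * (\<integral>\<^sup>+\<omega>. \<phi> n n (A n \<omega>) \<partial>M)"
      by (rule split)
    also have "\<dots> = ennreal (q ^ n * p)"
      using q0 by (simp add: Eless Eeq prod_ennreal ennreal_mult' ennreal_power)
    finally show ?thesis .
  qed
  have hval: "h n \<omega> = (if (\<exists>k. w < A k \<omega>) \<and> n = (LEAST k. w < A k \<omega>)
      then ennreal (exp (- c * (\<Sum>i<n. A i \<omega>))) else 0)" for n \<omega>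
  proof (cases "\<exists>k<n. w < A k \<omega>")
    case True
    then obtain k where k: "k < n" "w < A k \<omega>" by auto
    have "(LEAST k. w < A k \<omega>) \<le> k" by (rule Least_le[where P="\<lambda>k. w < A k \<omega>"]) (rule k(2))
    moreover have "\<phi> n k (A k \<omega>) = 0" using k by (simp add: \<phi>_def)
    ultimately show ?thesis using k by (auto simp: h_def intro!: prod_zero bexI[where x=k])
  next
    case False
    show ?thesis
    proof (cases "w < A n \<omega>")
      case True
      have L: "(LEAST k. w < A k \<omega>) = n"
        using False True by (intro Least_equality) (auto simp: not_less[symmetric])
      have "h n \<omega> = (\<Prod>k\<in>{..<n}. \<phi> n k (A k \<omega>)) * \<phi> n n (A n \<omega>)"
        unfolding h_def by (rule split)
      also have "\<dots> = (\<Prod>k\<in>{..<n}. ennreal (exp (- c * A k \<omega>)))"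
        using False True by (auto simp: \<phi>_def not_less indicator_def intro!: prod.cong) (meson leD)
      also have "\<dots> = ennreal (exp (- c * (\<Sum>i<n. A i \<omega>)))"
        by (simp add: prod_ennreal exp_sum[symmetric] sum_distrib_left sum_negf)
      finally show ?thesis using True L by auto
    next
      case F2: False
      have "\<phi> n n (A n \<omega>) = 0" using F2 by (simp add: \<phi>_def)
      then have "h n \<omega> = 0" by (auto simp: h_def intro!: prod_zero bexI[where x=n])
      moreover have "\<not> ((\<exists>k. w < A k \<omega>) \<and> n = (LEAST k. w < A k \<omega>))"
        using F2 by (metis (mono_tags, lifting) LeastI)
      ultimately show ?thesis by simp
    qed
  qed
  have sumh: "(\<Sum>n. h n \<omega>) = (if \<exists>k. w < A k \<omega> then ennreal (exp (- c * (\<Sum>i<(LEAST k. w < A k \<omega>). A i \<omega>))) else 0)" for \<omega>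
  proof (cases "\<exists>k. w < A k \<omega>")
    case True
    have "(\<lambda>n. h n \<omega>) = (\<lambda>n. if n = (LEAST k. w < A k \<omega>) then ennreal (exp (- c * (\<Sum>i<n. A i \<omega>))) else 0)"
      using True by (auto simp: hval)
    then have "(\<lambda>n. h n \<omega>) sums ennreal (exp (- c * (\<Sum>i<(LEAST k. w < A k \<omega>). A i \<omega>)))"
      using sums_single[of "LEAST k. w < A k \<omega>" "\<lambda>n. ennreal (exp (- c * (\<Sum>i<n. A i \<omega>)))"] by simp
    then show ?thesis using True by (simp add: sums_iff)
  next
    case False
    then show ?thesis by (simp add: hval)
  qed
  have "(\<integral>\<^sup>+\<omega>. (if \<exists>k. w < A k \<omega> then ennreal (exp (- c * (\<Sum>i<(LEAST k. w < A k \<omega>). A i \<omega>))) else 0) \<partial>M)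
      = (\<integral>\<^sup>+\<omega>. (\<Sum>n. h n \<omega>) \<partial>M)" by (simp add: sumh)
  also have "\<dots> = (\<Sum>n. \<integral>\<^sup>+\<omega>. h n \<omega> \<partial>M)"
    by (rule nn_integral_suminf) measurable
  also have "\<dots> = (\<Sum>n. ennreal (q ^ n * p))" by (simp add: Eh)
  also have "\<dots> = ennreal (p / (1 - q))"
  proof -
    have "norm q < 1" using q0 q1 by simp
    from sums_mult2[OF geometric_sums[OF this], of p]
    have "(\<lambda>n. q ^ n * p) sums (1 / (1 - q) * p)" .
    then have "(\<lambda>n. q ^ n * p) sums (p / (1 - q))" by simp
    then have "(\<lambda>n. ennreal (q ^ n * p)) sums ennreal (p / (1 - q))"
      using q0 q1 by (subst sums_ennreal) (auto simp: p_def)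
    then show ?thesis by (simp add: sums_iff)
  qed
  finally show ?thesis by (simp add: p_def q_def)
qed


lemma (in prob_space) ind_iface:
  fixes S :: "'a \<Rightarrow> real" and A :: "nat \<Rightarrow> 'a \<Rightarrow> real" and f :: "nat \<Rightarrow> real \<Rightarrow> ennreal"
  assumes ind: "indep_vars (\<lambda>_. borel) (\<lambda>i. case i of None \<Rightarrow> S | Some k \<Rightarrow> A k) UNIV"
    and J: "finite J" and fm: "\<And>k. f k \<in> borel_measurable borel"
  shows "(\<integral>\<^sup>+\<omega>. (\<Prod>k\<in>J. f k (A k \<omega>)) \<partial>M) = (\<Prod>k\<in>J. \<integral>\<^sup>+\<omega>. f k (A k \<omega>) \<partial>M)"
proof -
  let ?X = "\<lambda>i. case i of None \<Rightarrow> S | Some k \<Rightarrow> A k"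
  let ?Y = "\<lambda>i::nat option. case i of None \<Rightarrow> (\<lambda>_::real. 0::ennreal) | Some k \<Rightarrow> f k"
  have "indep_vars (\<lambda>_. borel) ?X (Some ` J)"
    by (rule indep_vars_subset[OF ind]) auto
  then have i2: "indep_vars (\<lambda>_. borel) (\<lambda>i \<omega>. ?Y i (?X i \<omega>)) (Some ` J)"
    by (rule indep_vars_compose2) (auto simp: fm)
  have "(\<integral>\<^sup>+\<omega>. (\<Prod>i\<in>Some ` J. ?Y i (?X i \<omega>)) \<partial>M) = (\<Prod>i\<in>Some ` J. \<integral>\<^sup>+\<omega>. ?Y i (?X i \<omega>) \<partial>M)"
    by (rule indep_vars_nn_integral) (use J i2 in auto)
  then show ?thesis
    by (simp add: prod.reindex)
qed

lemma removal_measurable: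
  fixes a :: "nat \<Rightarrow> 'b \<Rightarrow> real"
  assumes am[measurable]: "\<And>k. a k \<in> borel_measurable N"
  shows "(\<lambda>x. removal_time w (\<lambda>k. a k x)) \<in> borel_measurable N"
proof -
  have L: "(\<lambda>x. LEAST k. w < a k x) \<in> measurable N (count_space UNIV)" by measurable
  have "(\<lambda>x. (\<lambda>n x. (\<Sum>i<n. a i x) + w) (LEAST k. w < a k x) x) \<in> borel_measurable N"
    by (rule measurable_compose_countable[OF _ L]) measurable
  then show ?thesis unfolding removal_time_def Let_def by simp
qed

lemma (in prob_space) indep_SR:
  fixes S :: "'a \<Rightarrow> real" and A :: "nat \<Rightarrow> 'a \<Rightarrow> real" and w :: real
  assumes ind: "indep_vars (\<lambda>_. borel) (\<lambda>i. case i of None \<Rightarrow> S | Some k \<Rightarrow> A k) UNIV"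
  shows "indep_var borel S borel (\<lambda>\<omega>. removal_time w (\<lambda>k. A k \<omega>))"
proof -
  let ?X = "\<lambda>i. case i of None \<Rightarrow> S | Some k \<Rightarrow> A k"
  have i1: "indep_var (PiM {None} (\<lambda>_. borel)) (\<lambda>\<omega>. restrict (\<lambda>i. ?X i \<omega>) {None})
      (PiM (range Some) (\<lambda>_. borel)) (\<lambda>\<omega>. restrict (\<lambda>i. ?X i \<omega>) (range Some))"
    by (rule indep_var_restrict[OF ind]) auto
  have m1: "(\<lambda>g. g None) \<in> measurable (PiM {None} (\<lambda>_. borel)) (borel :: real measure)"
    by (rule measurable_component_singleton) simp
  have m2: "(\<lambda>g. removal_time w (\<lambda>k. g (Some k))) \<in> measurable (PiM (range Some) (\<lambda>_. borel)) (borel :: real measure)"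
  proof -
    have [measurable]: "(\<lambda>g. g (Some k)) \<in> measurable (PiM (range Some) (\<lambda>_. borel)) (borel :: real measure)" for k
      by (rule measurable_component_singleton) simp
    show ?thesis by (rule removal_measurable) measurable
  qed
  from indep_var_compose[OF i1 m1 m2] show ?thesis
    by (simp add: comp_def)
qed

lemma ind_Ico: "(\<integral>\<^sup>+t. indicator {0..<x} t \<partial>lborel) = ennreal (x::real)"
  by (cases "0 \<le> x") (auto simp: ennreal_neg)

lemma exp_nn_int2:
  fixes c r :: real
  assumes "c > 0"
  shows "(\<integral>\<^sup>+t. ennreal (exp (- c * t)) * indicator {0..<r} t \<partial>lborel) = ennreal ((1 - exp (- c * r)) / c)"
proof (cases "r \<ge> 0")
  case True
  have "(\<integral>\<^sup>+t. ennreal (exp (- c * t)) * indicator {0..<r} t \<partial>lborel)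
      = (\<integral>\<^sup>+x. ennreal (indicator {0..r} x * (1 * exp (- c * x))) \<partial>lborel)"
    by (rule nn_integral_cong_AE) (use AE_lborel_singleton[of r] in \<open>auto simp: indicator_def\<close>)
  also have "\<dots> = ennreal ((1 - exp (- c * r)) / c)"
    using exp_nn_int[OF assms True, of 1] by simp
  finally show ?thesis .
next
  case False
  then have "c * r \<le> 0" using assms by (simp add: mult_pos_neg less_imp_le)
  then have "1 \<le> exp (- c * r)" by simp
  then have "(1 - exp (- c * r)) / c \<le> 0" using assms
    by (intro divide_nonpos_pos) auto
  then show ?thesis using False by (simp add: ennreal_neg)
qed


lemma final_alg:
  fixes a b lam \<mu> :: real
  assumes "a > 0" "b > 0" "lam > 0" "\<mu> > 0"
  shows "1 / \<mu> - a / \<mu> * (b / (1 - lam / (lam + \<mu>) * (1 - a * b))) = (1 - a * b) / (\<mu> + lam * (a * b))"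
proof -
  define P where "P = \<mu> + lam * (a * b)"
  have P: "P > 0" using assms by (simp add: P_def add_pos_pos)
  have lm: "lam + \<mu> > 0" using assms by simp
  have d: "1 - lam / (lam + \<mu>) * (1 - a * b) = P / (lam + \<mu>)"
    using assms lm by (simp add: field_simps P_def)
  have "1 / \<mu> - a / \<mu> * (b / (P / (lam + \<mu>))) = (P - a * b * (lam + \<mu>)) / (\<mu> * P)"
    using P lm assms by (simp add: field_simps)
  also have "P - a * b * (lam + \<mu>) = \<mu> * (1 - a * b)"
    by (simp add: P_def algebra_simps)
  also have "\<mu> * (1 - a * b) / (\<mu> * P) = (1 - a * b) / P"
    using assms by simp
  finally show ?thesis unfolding d P_def .
qed


lemma ind_meas:
  fixes f :: "'a \<Rightarrow> real"
  assumes [measurable]: "f \<in> borel_measurable M"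
  shows "(\<lambda>x. indicator {0..<f (fst x)} (snd x) :: ennreal) \<in> borel_measurable (M \<Otimes>\<^sub>M lborel)"
proof -
  have "(\<lambda>x. indicator {0..<f (fst x)} (snd x) :: ennreal) = (\<lambda>x. if 0 \<le> snd x \<and> snd x < f (fst x) then 1 else 0)"
    by (auto simp: indicator_def fun_eq_iff)
  also have "\<dots> \<in> borel_measurable (M \<Otimes>\<^sub>M lborel)"
    by measurable
  finally show ?thesis .
qed

theorem mainTheorem2:
  fixes M :: "'w measure" and lam \<mu> d \<theta> :: real
    and S :: "'w \<Rightarrow> real" and A :: "nat \<Rightarrow> 'w \<Rightarrow> real"
  assumes "prob_space M"
    and "lam > 0" and "\<mu> > 0" and "d > 0" and "0 \<le> \<theta>" and "\<theta> \<le> d"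
    and "distributed M lborel S (exponential_density \<mu>)"
    and "\<And>k. distributed M lborel (A k) (exponential_density lam)"
    and "prob_space.indep_vars M (\<lambda>_. borel)
           (\<lambda>i. case i of None \<Rightarrow> S | Some k \<Rightarrow> A k) UNIV"
  shows "integrable M (\<lambda>\<omega>. clearance_length (d - \<theta>) (S \<omega>) (\<lambda>k. A k \<omega>))
    \<and> (\<integral>\<omega>. clearance_length (d - \<theta>) (S \<omega>) (\<lambda>k. A k \<omega>) \<partial>M)
      = (1 - exp (-(lam + \<mu>) * (d - \<theta>))) / (\<mu> + lam * exp (-(lam + \<mu>) * (d - \<theta>)))"
proof -
  interpret prob_space M by (rule assms(1))
  note lam = assms(2) and mu = assms(3)
  note distS = assms(7) and distA = assms(8) and ind = assms(9)
  define w where "w = d - \<theta>"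
  have w0: "0 \<le> w" using assms(6) by (simp add: w_def)
  have Sm[measurable]: "S \<in> borel_measurable M" using distributed_measurable[OF distS] by simp
  have Am[measurable]: "A k \<in> borel_measurable M" for k using distributed_measurable[OF distA] by simp
  define R where "R \<omega> = removal_time w (\<lambda>k. A k \<omega>)" for \<omega>
  have Rm[measurable]: "R \<in> borel_measurable M"
    unfolding R_def by (rule removal_measurable) (rule Am)
  have Teq: "clearance_length (d - \<theta>) (S \<omega>) (\<lambda>k. A k \<omega>) = min (S \<omega>) (R \<omega>)" for \<omega>
    by (simp add: clearance_length_def R_def w_def)
  have posS: "AE \<omega> in M. 0 < S \<omega>"
  proof -
    have "prob {\<omega>\<in>space M. 0 < S \<omega>} = 1"
      using exponential_distributedD_gt[OF distS order_refl mu] by simp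
    from AE_prob_1[OF this] show ?thesis by eventually_elim auto
  qed
  have posA: "AE \<omega> in M. \<forall>k. 0 < A k \<omega>"
  proof (rule AE_all_countable[THEN iffD2], intro allI)
    fix k
    have "prob {\<omega>\<in>space M. 0 < A k \<omega>} = 1"
      using exponential_distributedD_gt[OF distA order_refl lam] by simp
    from AE_prob_1[OF this] show "AE \<omega> in M. 0 < A k \<omega>" by eventually_elim auto
  qed
  have posR: "AE \<omega> in M. 0 \<le> R \<omega>"
    using posA by eventually_elim
      (auto simp: R_def removal_time_def Let_def w0 less_imp_le intro!: add_nonneg_nonneg sum_nonneg)
  have indI: "\<And>J (f :: nat \<Rightarrow> real \<Rightarrow> ennreal). finite J \<Longrightarrow> (\<And>k. f k \<in> borel_measurable borel) \<Longrightarrow>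
       (\<integral>\<^sup>+\<omega>. (\<Prod>k\<in>J. f k (A k \<omega>)) \<partial>M) = (\<Prod>k\<in>J. \<integral>\<^sup>+\<omega>. f k (A k \<omega>) \<partial>M)"
    using ind_iface[OF ind] by blast
  have exAE: "AE \<omega> in M. \<exists>k. w < A k \<omega>"
  proof -
    have G: "(\<integral>\<^sup>+\<omega>. (if \<exists>k. w < A k \<omega> then ennreal (exp (- 0 * (\<Sum>i<(LEAST k. w < A k \<omega>). A i \<omega>))) else 0) \<partial>M)
     = ennreal (exp (- w * lam) / (1 - lam / (lam + 0) * (1 - exp (- (lam + 0) * w))))"
      by (rule geo_main[OF lam w0 order_refl distA indI])
    have r1: "exp (- w * lam) / (1 - lam / (lam + 0) * (1 - exp (- (lam + 0) * w))) = 1"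
      using lam by (simp add: mult.commute)
    have "(\<integral>\<^sup>+\<omega>. (if \<exists>k. w < A k \<omega> then ennreal (exp (- 0 * (\<Sum>i<(LEAST k. w < A k \<omega>). A i \<omega>))) else 0) \<partial>M)
       = (\<integral>\<^sup>+\<omega>. indicator {\<omega>\<in>space M. \<exists>k. w < A k \<omega>} \<omega> \<partial>M)"
      by (intro nn_integral_cong) (auto simp: indicator_def)
    also have "\<dots> = emeasure M {\<omega>\<in>space M. \<exists>k. w < A k \<omega>}"
      by (rule nn_integral_indicator) measurable
    finally have "emeasure M {\<omega>\<in>space M. \<exists>k. w < A k \<omega>} = 1" using G r1 by simp
    then have "prob {\<omega>\<in>space M. \<exists>k. w < A k \<omega>} = 1" by (simp add: emeasure_eq_measure)
    from AE_prob_1[OF this] show ?thesis by eventually_elim auto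
  qed
  define q where "q = lam / (lam + \<mu>) * (1 - exp (- (lam + \<mu>) * w))"
  define K where "K = exp (- \<mu> * w) / \<mu> * (exp (- w * lam) / (1 - q))"
  have Gmu: "(\<integral>\<^sup>+\<omega>. (if \<exists>k. w < A k \<omega> then ennreal (exp (- \<mu> * (\<Sum>i<(LEAST k. w < A k \<omega>). A i \<omega>))) else 0) \<partial>M)
     = ennreal (exp (- w * lam) / (1 - q))"
    unfolding q_def by (rule geo_main[OF lam w0 less_imp_le[OF mu] distA indI])
  have q1: "q < 1"
  proof -
    have e1: "exp (- (lam + \<mu>) * w) \<le> 1" using lam mu w0 by (simp add: mult_nonpos_nonneg)
    have "lam / (lam + \<mu>) \<le> 1" "0 \<le> lam / (lam + \<mu>)" "0 \<le> 1 - exp (- (lam + \<mu>) * w)"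
      using lam mu e1 by auto
    then have "lam / (lam + \<mu>) * (1 - exp (- (lam + \<mu>) * w)) \<le> 1 - exp (- (lam + \<mu>) * w)"
      by (intro mult_left_le_one_le) auto
    then have "lam / (lam + \<mu>) * (1 - exp (- (lam + \<mu>) * w)) < 1"
      using exp_gt_zero[of "- (lam + \<mu>) * w"] by linarith
    then show ?thesis by (simp add: q_def)
  qed
  have K0: "0 \<le> K" using q1 mu by (simp add: K_def)
  have Lap: "(\<integral>\<^sup>+\<omega>. ennreal (exp (- \<mu> * R \<omega>) / \<mu>) \<partial>M) = ennreal K"
  proof -
    have "(\<integral>\<^sup>+\<omega>. ennreal (exp (- \<mu> * R \<omega>) / \<mu>) \<partial>M)
      = (\<integral>\<^sup>+\<omega>. ennreal (exp (- \<mu> * w) / \<mu>) * (if \<exists>k. w < A k \<omega> then ennreal (exp (- \<mu> * (\<Sum>i<(LEAST k. w < A k \<omega>). A i \<omega>))) else 0) \<partial>M)"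
    proof (rule nn_integral_cong_AE)
      show "AE \<omega> in M. ennreal (exp (- \<mu> * R \<omega>) / \<mu>) = ennreal (exp (- \<mu> * w) / \<mu>) * (if \<exists>k. w < A k \<omega> then ennreal (exp (- \<mu> * (\<Sum>i<(LEAST k. w < A k \<omega>). A i \<omega>))) else 0)"
        using exAE
      proof eventually_elim
        case (elim \<omega>)
        have "exp (- \<mu> * R \<omega>) / \<mu> = exp (- \<mu> * w) / \<mu> * exp (- \<mu> * (\<Sum>i<(LEAST k. w < A k \<omega>). A i \<omega>))"
          by (simp add: R_def removal_time_def Let_def algebra_simps exp_add[symmetric])
        then show ?case using elim mu by (simp only: if_True) (subst ennreal_mult[symmetric], auto)
      qed
    qed
    also have "\<dots> = ennreal (exp (- \<mu> * w) / \<mu>) * ennreal (exp (- w * lam) / (1 - q))"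
      by (subst nn_integral_cmult) (auto simp: Gmu)
    also have "\<dots> = ennreal K" unfolding K_def using mu q1 by (subst ennreal_mult[symmetric]) auto
    finally show ?thesis .
  qed
  have iSR: "indep_var borel S borel R"
    using indep_SR[OF ind, of w] unfolding R_def .
  interpret P: pair_sigma_finite M lborel ..
  have im1[measurable]: "(\<lambda>x. indicator {0..<S (fst x)} (snd x) :: ennreal) \<in> borel_measurable (M \<Otimes>\<^sub>M lborel)"
    by (rule ind_meas) (rule Sm)
  have im2[measurable]: "(\<lambda>x. indicator {0..<R (fst x)} (snd x) :: ennreal) \<in> borel_measurable (M \<Otimes>\<^sub>M lborel)"
    by (rule ind_meas) (rule Rm)
  define X where "X = (\<integral>\<^sup>+\<omega>. ennreal (min (S \<omega>) (R \<omega>)) \<partial>M)"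
  have c1: "X = (\<integral>\<^sup>+\<omega>. (\<integral>\<^sup>+t. indicator {0..<S \<omega>} t * indicator {0..<R \<omega>} t \<partial>lborel) \<partial>M)"
  proof -
    have "indicator {0..<S \<omega>} t * indicator {0..<R \<omega>} t = (indicator {0..<min (S \<omega>) (R \<omega>)} t :: ennreal)" for t \<omega>
      by (auto simp: indicator_def)
    then show ?thesis unfolding X_def by (simp add: ind_Ico)
  qed
  also have "\<dots> = (\<integral>\<^sup>+t. (\<integral>\<^sup>+\<omega>. indicator {0..<S \<omega>} t * indicator {0..<R \<omega>} t \<partial>M) \<partial>lborel)"
    by (rule P.Fubini'[symmetric]) (unfold split_beta', measurable)
  also have "\<dots> = (\<integral>\<^sup>+t. (\<integral>\<^sup>+\<omega>. ennreal (exp (- \<mu> * t)) * indicator {0..<R \<omega>} t \<partial>M) \<partial>lborel)"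
  proof (rule nn_integral_cong)
    fix t :: real
    have Rev: "{\<omega>\<in>space M. t < R \<omega>} \<in> sets M" by measurable
    show "(\<integral>\<^sup>+\<omega>. indicator {0..<S \<omega>} t * indicator {0..<R \<omega>} t \<partial>M) = (\<integral>\<^sup>+\<omega>. ennreal (exp (- \<mu> * t)) * indicator {0..<R \<omega>} t \<partial>M)"
    proof (cases "0 \<le> t")
      case False
      then show ?thesis by (simp add: indicator_def)
    next
      case True
      have "(\<integral>\<^sup>+\<omega>. indicator {0..<S \<omega>} t * indicator {0..<R \<omega>} t \<partial>M)
          = (\<integral>\<^sup>+\<omega>. indicator {\<omega>\<in>space M. t < S \<omega> \<and> t < R \<omega>} \<omega> \<partial>M)"
        using True by (intro nn_integral_cong) (auto simp: indicator_def)
      also have "\<dots> = emeasure M {\<omega>\<in>space M. t < S \<omega> \<and> t < R \<omega>}"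
        by (rule nn_integral_indicator) measurable
      also have "\<dots> = ennreal (prob {\<omega>\<in>space M. t < S \<omega>} * prob {\<omega>\<in>space M. t < R \<omega>})"
      proof -
        have "prob ((\<lambda>x. (S x, R x)) -` ({t<..} \<times> {t<..}) \<inter> space M) =
            prob (S -` {t<..} \<inter> space M) * prob (R -` {t<..} \<inter> space M)"
          by (rule indep_varD[OF iSR]) auto
        moreover have "(\<lambda>x. (S x, R x)) -` ({t<..} \<times> {t<..}) \<inter> space M = {\<omega>\<in>space M. t < S \<omega> \<and> t < R \<omega>}"
          "S -` {t<..} \<inter> space M = {\<omega>\<in>space M. t < S \<omega>}" "R -` {t<..} \<inter> space M = {\<omega>\<in>space M. t < R \<omega>}"
          by auto
        ultimately show ?thesis by (simp add: emeasure_eq_measure)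
      qed
      also have "\<dots> = ennreal (exp (- \<mu> * t)) * emeasure M {\<omega>\<in>space M. t < R \<omega>}"
        using exponential_distributedD_gt[OF distS True mu]
        by (simp add: emeasure_eq_measure ennreal_mult'' mult.commute)
      also have "\<dots> = ennreal (exp (- \<mu> * t)) * (\<integral>\<^sup>+\<omega>. indicator {\<omega>\<in>space M. t < R \<omega>} \<omega> \<partial>M)"
        using nn_integral_indicator[OF Rev] by simp
      also have "\<dots> = (\<integral>\<^sup>+\<omega>. ennreal (exp (- \<mu> * t)) * indicator {\<omega>\<in>space M. t < R \<omega>} \<omega> \<partial>M)"
        by (rule nn_integral_cmult[symmetric]) measurable
      also have "\<dots> = (\<integral>\<^sup>+\<omega>. ennreal (exp (- \<mu> * t)) * indicator {0..<R \<omega>} t \<partial>M)"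
        using True by (intro nn_integral_cong) (auto simp: indicator_def)
      finally show ?thesis .
    qed
  qed
  also have "\<dots> = (\<integral>\<^sup>+\<omega>. (\<integral>\<^sup>+t. ennreal (exp (- \<mu> * t)) * indicator {0..<R \<omega>} t \<partial>lborel) \<partial>M)"
    by (rule P.Fubini') (unfold split_beta', measurable)
  also have "\<dots> = (\<integral>\<^sup>+\<omega>. ennreal ((1 - exp (- \<mu> * R \<omega>)) / \<mu>) \<partial>M)"
    by (intro nn_integral_cong) (rule exp_nn_int2[OF mu])
  finally have X1: "X = (\<integral>\<^sup>+\<omega>. ennreal ((1 - exp (- \<mu> * R \<omega>)) / \<mu>) \<partial>M)" .
  have XK: "X + ennreal K = ennreal (1 / \<mu>)"
  proof -
    have "X + ennreal K = (\<integral>\<^sup>+\<omega>. ennreal ((1 - exp (- \<mu> * R \<omega>)) / \<mu>) + ennreal (exp (- \<mu> * R \<omega>) / \<mu>) \<partial>M)"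
      unfolding X1 Lap[symmetric] by (rule nn_integral_add[symmetric]) measurable
    also have "\<dots> = (\<integral>\<^sup>+\<omega>. ennreal (1 / \<mu>) \<partial>M)"
    proof (rule nn_integral_cong_AE)
      show "AE \<omega> in M. ennreal ((1 - exp (- \<mu> * R \<omega>)) / \<mu>) + ennreal (exp (- \<mu> * R \<omega>) / \<mu>) = ennreal (1 / \<mu>)"
        using posR
      proof eventually_elim
        case (elim \<omega>)
        then have "exp (- \<mu> * R \<omega>) \<le> 1" using mu by (simp add: mult_nonneg_nonneg)
        then show ?case using mu
          by (subst ennreal_plus[symmetric]) (auto simp: diff_divide_distrib intro!: divide_right_mono)
      qed
    qed
    also have "\<dots> = ennreal (1 / \<mu>)" by (simp add: emeasure_space_1)
    finally show ?thesis .
  qed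
  have Xfin: "X \<noteq> \<top>" using XK by (cases "X = \<top>") auto
  then obtain x where x: "X = ennreal x" "0 \<le> x" by (cases X) auto
  have xval: "x = 1 / \<mu> - K"
  proof -
    have "ennreal (x + K) = ennreal (1 / \<mu>)" using XK x K0 by (simp add: ennreal_plus)
    then have "x + K = 1 / \<mu>" using x K0 mu by (subst (asm) ennreal_inj) auto
    then show ?thesis by simp
  qed
  have target: "1 / \<mu> - K = (1 - exp (-(lam + \<mu>) * (d - \<theta>))) / (\<mu> + lam * exp (-(lam + \<mu>) * (d - \<theta>)))"
  proof -
    have E2: "exp (- (lam + \<mu>) * w) = exp (- \<mu> * w) * exp (- w * lam)"
      by (simp add: exp_add[symmetric] algebra_simps)
    have E: "exp (-(lam + \<mu>) * (d - \<theta>)) = exp (- \<mu> * w) * exp (- w * lam)"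
      using E2 by (simp add: w_def)
    show ?thesis unfolding E K_def q_def E2
      by (rule final_alg) (use lam mu in auto)
  qed
  have Tm[measurable]: "(\<lambda>\<omega>. min (S \<omega>) (R \<omega>)) \<in> borel_measurable M" by measurable
  have Tpos: "AE \<omega> in M. 0 \<le> min (S \<omega>) (R \<omega>)"
    using posS posR by eventually_elim auto
  have int: "integrable M (\<lambda>\<omega>. min (S \<omega>) (R \<omega>))"
    by (rule integrableI_nonneg[OF Tm Tpos]) (use Xfin in \<open>simp add: X_def[symmetric] top.not_eq_extremum\<close>)
  have val: "(\<integral>\<omega>. min (S \<omega>) (R \<omega>) \<partial>M) = x"
    using integral_eq_nn_integral[OF Tm Tpos] x by (simp add: X_def[symmetric])
  show ?thesis unfolding Teq using int val xval target by simp
qed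

end
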